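(* Let $X$ be a compact metric space and $f\colon X\to X$ an expansive homeomorphism with the shadowing property. Then $f$ has the L-shadowing property.
   Context: $f$ is expansive if there is $c>0$ such that for all $x\neq y$ there is $k\in\mathbb{Z}$ with $d(f^k(x),f^k(y))>c$. A $\delta$-pseudo orbit is $(x_k)_{k\in\mathbb{Z}}$ with $d(f(x_k),x_{k+1})<\delta$ for all $k$; a two-sided limit pseudo orbit satisfies $d(f(x_k),x_{k+1})\to0$ as $|k|\to\infty$. $z$ $\varepsilon$-shadows $(x_k)$ if $d(f^k(z),x_k)<\varepsilon$ for all $k$, and two-sided limit shadows it if $d(f^k(z),x_k)\to0$ as $|k|\to\infty$. $f$ has the shadowing property if for every $\varepsilon>0$ there is $\delta>0$ such that every $\delta$-pseudo orbit is $\varepsilon$-shadowed. $f$ has the L-shadowing property if for every $\varepsilon>0$ there is $\delta>0$ such that every $\delta$-pseudo orbit that is also a two-sided limit pseudo orbit is both $\varepsilon$-shadowed and two-sided limit shadowed by one and the same point. *)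

theory Defs
  imports "HOL-Analysis.Analysis"
begin

definition zitr :: "'a set \<Rightarrow> ('a \<Rightarrow> 'a) \<Rightarrow> int \<Rightarrow> 'a \<Rightarrow> 'a" where
  "zitr X f k x = (if 0 \<le> k then (f ^^ nat k) x else (inv_into X f ^^ nat (- k)) x)"

definition expansive :: "'a::metric_space set \<Rightarrow> ('a \<Rightarrow> 'a) \<Rightarrow> bool" where
  "expansive X f \<longleftrightarrow> (\<exists>c>0. \<forall>x\<in>X. \<forall>y\<in>X. x \<noteq> y \<longrightarrow>
      (\<exists>k::int. dist (zitr X f k x) (zitr X f k y) > c))"

definition pseudo_orbit :: "'a::metric_space set \<Rightarrow> ('a \<Rightarrow> 'a) \<Rightarrow> real \<Rightarrow> (int \<Rightarrow> 'a) \<Rightarrow> bool" where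
  "pseudo_orbit X f \<delta> xs \<longleftrightarrow> (\<forall>k. xs k \<in> X) \<and> (\<forall>k. dist (f (xs k)) (xs (k + 1)) < \<delta>)"

definition two_sided_limit_pseudo_orbit :: "'a::metric_space set \<Rightarrow> ('a \<Rightarrow> 'a) \<Rightarrow> (int \<Rightarrow> 'a) \<Rightarrow> bool" where
  "two_sided_limit_pseudo_orbit X f xs \<longleftrightarrow> (\<forall>k. xs k \<in> X) \<and>
     ((\<lambda>k. dist (f (xs k)) (xs (k + 1))) \<longlongrightarrow> 0) at_top \<and>
     ((\<lambda>k. dist (f (xs k)) (xs (k + 1))) \<longlongrightarrow> 0) at_bot"

definition eps_shadows :: "'a::metric_space set \<Rightarrow> ('a \<Rightarrow> 'a) \<Rightarrow> real \<Rightarrow> 'a \<Rightarrow> (int \<Rightarrow> 'a) \<Rightarrow> bool" where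
  "eps_shadows X f \<epsilon> z xs \<longleftrightarrow> (\<forall>k. dist (zitr X f k z) (xs k) < \<epsilon>)"

definition limit_shadows :: "'a::metric_space set \<Rightarrow> ('a \<Rightarrow> 'a) \<Rightarrow> 'a \<Rightarrow> (int \<Rightarrow> 'a) \<Rightarrow> bool" where
  "limit_shadows X f z xs \<longleftrightarrow>
     ((\<lambda>k. dist (zitr X f k z) (xs k)) \<longlongrightarrow> 0) at_top \<and>
     ((\<lambda>k. dist (zitr X f k z) (xs k)) \<longlongrightarrow> 0) at_bot"

definition shadowing_property :: "'a::metric_space set \<Rightarrow> ('a \<Rightarrow> 'a) \<Rightarrow> bool" where
  "shadowing_property X f \<longleftrightarrow> (\<forall>\<epsilon>>0. \<exists>\<delta>>0. \<forall>xs. pseudo_orbit X f \<delta> xs \<longrightarrow>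
      (\<exists>z\<in>X. eps_shadows X f \<epsilon> z xs))"

definition L_shadowing_property :: "'a::metric_space set \<Rightarrow> ('a \<Rightarrow> 'a) \<Rightarrow> bool" where
  "L_shadowing_property X f \<longleftrightarrow> (\<forall>\<epsilon>>0. \<exists>\<delta>>0. \<forall>xs.
      pseudo_orbit X f \<delta> xs \<and> two_sided_limit_pseudo_orbit X f xs \<longrightarrow>
      (\<exists>z\<in>X. eps_shadows X f \<epsilon> z xs \<and> limit_shadows X f z xs))"

end

theory Submission
  imports Defs
begin

lemma hom_inj: "homeomorphism X X f g \<Longrightarrow> inj_on f X"
  unfolding homeomorphism_def by (metis inj_on_inverseI)

lemma funpow_in: "(\<And>y. y \<in> X \<Longrightarrow> h y \<in> X) \<Longrightarrow> x \<in> X \<Longrightarrow> (h ^^ n) x \<in> X"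
  by (induction n) auto

lemma zitr_in:
  assumes "homeomorphism X X f g" "x \<in> X"
  shows "zitr X f k x \<in> X"
proof -
  have fX: "\<And>y. y \<in> X \<Longrightarrow> f y \<in> X" using assms(1) unfolding homeomorphism_def by blast
  have iX: "\<And>y. y \<in> X \<Longrightarrow> inv_into X f y \<in> X" using assms(1) unfolding homeomorphism_def
    by (metis inv_into_into)
  show ?thesis unfolding zitr_def using funpow_in[OF fX] funpow_in[OF iX] assms(2) by simp
qed

lemma zitr0[simp]: "zitr X f 0 x = x" by (simp add: zitr_def)

lemma zitr_suc:
  assumes "homeomorphism X X f g" "x \<in> X"
  shows "zitr X f (k + 1) x = f (zitr X f k x)"
proof (cases "0 \<le> k")
  case True
  then have "nat (k+1) = Suc (nat k)" by simp
  then show ?thesis using True by (simp add: zitr_def)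
next
  case False
  then obtain m where m: "nat (-k) = Suc m" by (metis Suc_pred' less_irrefl not_le zero_less_nat_eq neg_0_less_iff_less)
  then have m2: "nat (-(k+1)) = m" by simp
  have iX: "\<And>y. y \<in> X \<Longrightarrow> inv_into X f y \<in> X" using assms(1) unfolding homeomorphism_def
    by (metis inv_into_into)
  have fi: "\<And>y. y \<in> X \<Longrightarrow> f (inv_into X f y) = y" using assms(1) unfolding homeomorphism_def
    by (metis f_inv_into_f)
  have lhs: "zitr X f (k + 1) x = (inv_into X f ^^ m) x"
  proof (cases "0 \<le> k + 1")
    case True
    then have "k = -1" using False by simp
    then have "m = 0" using m by simp
    then show ?thesis using True \<open>k = -1\<close> by (simp add: zitr_def)
  next
    case False
    then show ?thesis using m2 by (simp add: zitr_def)
  qed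
  have "zitr X f k x = inv_into X f ((inv_into X f ^^ m) x)"
    using False m by (simp add: zitr_def)
  then show ?thesis using lhs fi funpow_in[OF iX assms(2)] by simp
qed

lemma zitr_pred:
  assumes "homeomorphism X X f g" "x \<in> X"
  shows "zitr X f (k - 1) x = g (zitr X f k x)"
proof -
  have "zitr X f k x = f (zitr X f (k - 1) x)" using zitr_suc[OF assms, of "k-1"] by simp
  moreover have "zitr X f (k - 1) x \<in> X" using zitr_in[OF assms] .
  ultimately show ?thesis using assms(1) unfolding homeomorphism_def by metis
qed

lemma zitr_add:
  assumes "homeomorphism X X f g" "x \<in> X"
  shows "zitr X f (j + k) x = zitr X f j (zitr X f k x)"
proof (induction j rule: int_induct[where k=0])
  case base then show ?case by simp
next
  case (step1 i)
  have "zitr X f (i + 1 + k) x = f (zitr X f (i + k) x)"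
    using zitr_suc[OF assms, of "i+k"] by (simp add: algebra_simps)
  then show ?case using step1 zitr_suc[OF assms(1) zitr_in[OF assms]] by simp
next
  case (step2 i)
  have "zitr X f (i - 1 + k) x = g (zitr X f (i + k) x)"
    using zitr_pred[OF assms, of "i+k"] by (simp add: algebra_simps)
  then show ?case using step2 zitr_pred[OF assms(1) zitr_in[OF assms]] by simp
qed

lemma zitr_cont:
  assumes "homeomorphism X X f g"
  shows "continuous_on X (zitr X f k)"
proof (induction k rule: int_induct[where k=0])
  case base
  have "continuous_on X (\<lambda>x. x)" by (rule continuous_on_id)
  then show ?case by (simp add: continuous_on_cong)
next
  case (step1 i)
  have c: "continuous_on X (\<lambda>x. f (zitr X f i x))"
    apply (rule continuous_on_compose2[OF _ step1(2)])
    using assms zitr_in[OF assms] unfolding homeomorphism_def by auto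
  show ?case using continuous_on_cong[THEN iffD1, OF refl _ c, of "zitr X f (i+1)"]
    zitr_suc[OF assms] by simp
next
  case (step2 i)
  have c: "continuous_on X (\<lambda>x. g (zitr X f i x))"
    apply (rule continuous_on_compose2[OF _ step2(2)])
    using assms zitr_in[OF assms] unfolding homeomorphism_def by auto
  show ?case using continuous_on_cong[THEN iffD1, OF refl _ c, of "zitr X f (i-1)"]
    zitr_pred[OF assms] by simp
qed


lemma unif_exp:
  assumes cX: "compact X" and hom: "homeomorphism X X f g"
    and exp: "\<forall>x\<in>X. \<forall>y\<in>X. x \<noteq> y \<longrightarrow> (\<exists>k::int. dist (zitr X f k x) (zitr X f k y) > c)"
    and gp: "\<gamma> > 0"
  shows "\<exists>N::nat. \<forall>x\<in>X. \<forall>y\<in>X. (\<forall>k. \<bar>k\<bar> \<le> int N \<longrightarrow> dist (zitr X f k x) (zitr X f k y) \<le> c)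
            \<longrightarrow> dist x y < \<gamma>"
proof (rule ccontr)
  assume "\<not> ?thesis"
  then have "\<forall>N::nat. \<exists>p. fst p \<in> X \<and> snd p \<in> X \<and> (\<forall>k. \<bar>k\<bar> \<le> int N \<longrightarrow> dist (zitr X f k (fst p)) (zitr X f k (snd p)) \<le> c)
     \<and> dist (fst p) (snd p) \<ge> \<gamma>" by (metis fst_conv snd_conv not_less)
  then obtain p where p: "\<And>N. fst (p N) \<in> X \<and> snd (p N) \<in> X \<and> (\<forall>k. \<bar>k\<bar> \<le> int N \<longrightarrow> dist (zitr X f k (fst (p N))) (zitr X f k (snd (p N))) \<le> c)
     \<and> dist (fst (p N)) (snd (p N)) \<ge> \<gamma>" by metis
  have "compact (X \<times> X)" using cX by (simp add: compact_Times)
  then have "seq_compact (X \<times> X)" by (rule compact_imp_seq_compact)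
  moreover have "\<forall>n. p n \<in> X \<times> X" using p by (simp add: mem_Times_iff)
  ultimately obtain l r where l: "l \<in> X \<times> X" and r: "strict_mono r" and lim: "(p \<circ> r) \<longlonglongrightarrow> l"
    unfolding seq_compact_def by blast
  define a where "a = fst l"
  define b where "b = snd l"
  have aX: "a \<in> X" and bX: "b \<in> X" using l by (auto simp: a_def b_def mem_Times_iff)
  have la: "(\<lambda>n. fst (p (r n))) \<longlonglongrightarrow> a" unfolding a_def using tendsto_fst[OF lim] by (simp add: o_def)
  have lb: "(\<lambda>n. snd (p (r n))) \<longlonglongrightarrow> b" unfolding b_def using tendsto_snd[OF lim] by (simp add: o_def)
  have "\<gamma> \<le> dist a b"
    using LIMSEQ_le_const[OF tendsto_dist[OF la lb], of \<gamma>] p by blast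
  then have "a \<noteq> b" using gp by auto
  then obtain k where k: "dist (zitr X f k a) (zitr X f k b) > c" using exp aX bX by blast
  have ca: "(\<lambda>n. zitr X f k (fst (p (r n)))) \<longlonglongrightarrow> zitr X f k a"
    using continuous_on_tendsto_compose[OF zitr_cont[OF hom] la aX] p by simp
  have cb: "(\<lambda>n. zitr X f k (snd (p (r n)))) \<longlonglongrightarrow> zitr X f k b"
    using continuous_on_tendsto_compose[OF zitr_cont[OF hom] lb bX] p by simp
  have "\<forall>n\<ge>nat \<bar>k\<bar>. dist (zitr X f k (fst (p (r n)))) (zitr X f k (snd (p (r n)))) \<le> c"
  proof (intro allI impI)
    fix n assume "n \<ge> nat \<bar>k\<bar>"
    then have "r n \<ge> nat \<bar>k\<bar>" using seq_suble[OF r, of n] by linarith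
    then have "\<bar>k\<bar> \<le> int (r n)" by linarith
    then show "dist (zitr X f k (fst (p (r n)))) (zitr X f k (snd (p (r n)))) \<le> c" using p by blast
  qed
  then have "dist (zitr X f k a) (zitr X f k b) \<le> c"
    using LIMSEQ_le_const2[OF tendsto_dist[OF ca cb]] by blast
  then show False using k by simp
qed


lemma fwd:
  assumes hom: "homeomorphism X X f g"
    and UE: "\<And>\<gamma>. \<gamma> > 0 \<Longrightarrow> \<exists>N::nat. \<forall>x\<in>X. \<forall>y\<in>X. (\<forall>k. \<bar>k\<bar> \<le> int N \<longrightarrow> dist (zitr X f k x) (zitr X f k y) \<le> c)
            \<longrightarrow> dist x y < \<gamma>"
    and SH: "shadowing_property X f"
    and xsX: "\<And>k. xs k \<in> X"
    and lim: "((\<lambda>k. dist (f (xs k)) (xs (k + 1))) \<longlongrightarrow> 0) at_top"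
    and zX: "z \<in> X" and zs: "\<And>k. dist (zitr X f k z) (xs k) < c / 2"
  shows "((\<lambda>k. dist (zitr X f k z) (xs k)) \<longlongrightarrow> 0) at_top"
proof -
  have fX: "\<And>y. y \<in> X \<Longrightarrow> f y \<in> X" using hom unfolding homeomorphism_def by blast
  show ?thesis unfolding tendsto_iff
  proof (intro allI impI)
    fix e :: real assume e: "e > 0"
    have cpos: "c > 0" using zs[of 0] zero_le_dist[of "zitr X f 0 z" "xs 0"] by linarith
    define \<gamma> where "\<gamma> = min (e/2) (c/2)"
    have gp: "\<gamma> > 0" using e cpos by (simp add: \<gamma>_def)
    obtain \<delta> where dp: "\<delta> > 0" and sh: "\<And>ys. pseudo_orbit X f \<delta> ys \<Longrightarrow> \<exists>w\<in>X. eps_shadows X f \<gamma> w ys"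
      using SH gp unfolding shadowing_property_def by blast
    obtain K where K: "\<And>k. k \<ge> K \<Longrightarrow> dist (f (xs k)) (xs (k + 1)) < \<delta>"
      using lim dp unfolding tendsto_iff eventually_at_top_linorder by force
    obtain N where N: "\<forall>x\<in>X. \<forall>y\<in>X. (\<forall>k. \<bar>k\<bar> \<le> int N \<longrightarrow> dist (zitr X f k x) (zitr X f k y) \<le> c)
            \<longrightarrow> dist x y < e/2" using UE[of "e/2"] e by auto
    define ys where "ys j = (if j \<ge> K then xs j else zitr X f (j - K) (xs K))" for j
    have ysle: "ys j = zitr X f (j - K) (xs K)" if "j \<le> K" for j
      using that by (auto simp: ys_def)
    have po: "pseudo_orbit X f \<delta> ys"
      unfolding pseudo_orbit_def
    proof (intro conjI allI)
      fix k show "ys k \<in> X" using xsX zitr_in[OF hom xsX] by (simp add: ys_def)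
    next
      fix k show "dist (f (ys k)) (ys (k + 1)) < \<delta>"
      proof (cases "k \<ge> K")
        case True then show ?thesis using K[of k] by (simp add: ys_def)
      next
        case False
        then have "ys k = zitr X f (k - K) (xs K)" "ys (k+1) = zitr X f (k - K + 1) (xs K)"
          using ysle[of k] ysle[of "k+1"] by (auto simp: algebra_simps)
        then show ?thesis using zitr_suc[OF hom xsX, of "k-K" K] dp by simp
      qed
    qed
    obtain w where wX: "w \<in> X" and ws: "\<And>j. dist (zitr X f j w) (ys j) < \<gamma>"
      using sh[OF po] unfolding eps_shadows_def by blast
    have "\<forall>k\<ge>K + int N. dist (dist (zitr X f k z) (xs k)) 0 < e"
    proof (intro allI impI)
      fix k assume kK: "k \<ge> K + int N"
      have "dist (zitr X f k z) (zitr X f k w) < e/2"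
      proof -
        have "\<forall>i. \<bar>i\<bar> \<le> int N \<longrightarrow> dist (zitr X f i (zitr X f k z)) (zitr X f i (zitr X f k w)) \<le> c"
        proof (intro allI impI)
          fix i :: int assume i: "\<bar>i\<bar> \<le> int N"
          then have ik: "i + k \<ge> K" using kK by linarith
          have "dist (zitr X f (i+k) z) (zitr X f (i+k) w) \<le> dist (zitr X f (i+k) z) (xs (i+k)) + dist (zitr X f (i+k) w) (xs (i+k))"
            by (rule dist_triangle2)
          also have "\<dots> < c/2 + \<gamma>" using zs[of "i+k"] ws[of "i+k"] ik by (intro add_strict_mono) (auto simp: ys_def)
          also have "\<dots> \<le> c" by (simp add: \<gamma>_def)
          finally show "dist (zitr X f i (zitr X f k z)) (zitr X f i (zitr X f k w)) \<le> c"
            using zitr_add[OF hom zX] zitr_add[OF hom wX] by simp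
        qed
        then show ?thesis using N zitr_in[OF hom zX] zitr_in[OF hom wX] by blast
      qed
      moreover have "dist (zitr X f k w) (xs k) < e/2" using ws[of k] kK
        by (simp add: ys_def \<gamma>_def split: if_splits)
      ultimately have "dist (zitr X f k z) (xs k) < e"
        using dist_triangle[of "zitr X f k z" "xs k" "zitr X f k w"] by linarith
      then show "dist (dist (zitr X f k z) (xs k)) 0 < e" by simp
    qed
    then show "\<forall>\<^sub>F k in at_top. dist (dist (zitr X f k z) (xs k)) 0 < e"
      unfolding eventually_at_top_linorder by blast
  qed
qed


lemma bwd:
  assumes hom: "homeomorphism X X f g"
    and UE: "\<And>\<gamma>. \<gamma> > 0 \<Longrightarrow> \<exists>N::nat. \<forall>x\<in>X. \<forall>y\<in>X. (\<forall>k. \<bar>k\<bar> \<le> int N \<longrightarrow> dist (zitr X f k x) (zitr X f k y) \<le> c)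
            \<longrightarrow> dist x y < \<gamma>"
    and SH: "shadowing_property X f"
    and xsX: "\<And>k. xs k \<in> X"
    and lim: "((\<lambda>k. dist (f (xs k)) (xs (k + 1))) \<longlongrightarrow> 0) at_bot"
    and zX: "z \<in> X" and zs: "\<And>k. dist (zitr X f k z) (xs k) < c / 2"
  shows "((\<lambda>k. dist (zitr X f k z) (xs k)) \<longlongrightarrow> 0) at_bot"
proof -
  show ?thesis unfolding tendsto_iff
  proof (intro allI impI)
    fix e :: real assume e: "e > 0"
    have cpos: "c > 0" using zs[of 0] zero_le_dist[of "zitr X f 0 z" "xs 0"] by linarith
    define \<gamma> where "\<gamma> = min (e/2) (c/2)"
    have gp: "\<gamma> > 0" using e cpos by (simp add: \<gamma>_def)
    obtain \<delta> where dp: "\<delta> > 0" and sh: "\<And>ys. pseudo_orbit X f \<delta> ys \<Longrightarrow> \<exists>w\<in>X. eps_shadows X f \<gamma> w ys"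
      using SH gp unfolding shadowing_property_def by blast
    obtain K where K: "\<And>k. k \<le> K \<Longrightarrow> dist (f (xs k)) (xs (k + 1)) < \<delta>"
      using lim dp unfolding tendsto_iff eventually_at_bot_linorder by force
    obtain N where N: "\<forall>x\<in>X. \<forall>y\<in>X. (\<forall>k. \<bar>k\<bar> \<le> int N \<longrightarrow> dist (zitr X f k x) (zitr X f k y) \<le> c)
            \<longrightarrow> dist x y < e/2" using UE[of "e/2"] e by auto
    define ys where "ys j = (if j \<le> K then xs j else zitr X f (j - K) (xs K))" for j
    have ysge: "ys j = zitr X f (j - K) (xs K)" if "j \<ge> K" for j
      using that by (auto simp: ys_def)
    have po: "pseudo_orbit X f \<delta> ys"
      unfolding pseudo_orbit_def
    proof (intro conjI allI)
      fix k show "ys k \<in> X" using xsX zitr_in[OF hom xsX] by (simp add: ys_def)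
    next
      fix k show "dist (f (ys k)) (ys (k + 1)) < \<delta>"
      proof (cases "k < K")
        case True then show ?thesis using K[of k] by (simp add: ys_def)
      next
        case False
        then have "ys k = zitr X f (k - K) (xs K)" "ys (k+1) = zitr X f (k - K + 1) (xs K)"
          using ysge[of k] ysge[of "k+1"] by (auto simp: algebra_simps)
        then show ?thesis using zitr_suc[OF hom xsX, of "k-K" K] dp by simp
      qed
    qed
    obtain w where wX: "w \<in> X" and ws: "\<And>j. dist (zitr X f j w) (ys j) < \<gamma>"
      using sh[OF po] unfolding eps_shadows_def by blast
    have "\<forall>k\<le>K - int N. dist (dist (zitr X f k z) (xs k)) 0 < e"
    proof (intro allI impI)
      fix k assume kK: "k \<le> K - int N"
      have "dist (zitr X f k z) (zitr X f k w) < e/2"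
      proof -
        have "\<forall>i. \<bar>i\<bar> \<le> int N \<longrightarrow> dist (zitr X f i (zitr X f k z)) (zitr X f i (zitr X f k w)) \<le> c"
        proof (intro allI impI)
          fix i :: int assume i: "\<bar>i\<bar> \<le> int N"
          then have ik: "i + k \<le> K" using kK by linarith
          have "dist (zitr X f (i+k) z) (zitr X f (i+k) w) \<le> dist (zitr X f (i+k) z) (xs (i+k)) + dist (zitr X f (i+k) w) (xs (i+k))"
            by (rule dist_triangle2)
          also have "\<dots> < c/2 + \<gamma>" using zs[of "i+k"] ws[of "i+k"] ik by (intro add_strict_mono) (auto simp: ys_def)
          also have "\<dots> \<le> c" by (simp add: \<gamma>_def)
          finally show "dist (zitr X f i (zitr X f k z)) (zitr X f i (zitr X f k w)) \<le> c"
            using zitr_add[OF hom zX] zitr_add[OF hom wX] by simp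
        qed
        then show ?thesis using N zitr_in[OF hom zX] zitr_in[OF hom wX] by blast
      qed
      moreover have "dist (zitr X f k w) (xs k) < e/2" using ws[of k] kK
        by (simp add: ys_def \<gamma>_def split: if_splits)
      ultimately have "dist (zitr X f k z) (xs k) < e"
        using dist_triangle[of "zitr X f k z" "xs k" "zitr X f k w"] by linarith
      then show "dist (dist (zitr X f k z) (xs k)) 0 < e" by simp
    qed
    then show "\<forall>\<^sub>F k in at_bot. dist (dist (zitr X f k z) (xs k)) 0 < e"
      unfolding eventually_at_bot_linorder by blast
  qed
qed

theorem proposition3p2:
  fixes X :: "'a::metric_space set" and f :: "'a \<Rightarrow> 'a"
  assumes "compact X"
    and "\<exists>g. homeomorphism X X f g"
    and "expansive X f"
    and "shadowing_property X f"
  shows "L_shadowing_property X f"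
proof -
  obtain g where hom: "homeomorphism X X f g" using assms(2) by blast
  obtain c where cpos: "c > 0" and exp: "\<forall>x\<in>X. \<forall>y\<in>X. x \<noteq> y \<longrightarrow> (\<exists>k::int. dist (zitr X f k x) (zitr X f k y) > c)"
    using assms(3) unfolding expansive_def by blast
  note UE = unif_exp[OF assms(1) hom exp]
  show ?thesis unfolding L_shadowing_property_def
  proof (intro allI impI)
    fix \<epsilon> :: real assume ep: "\<epsilon> > 0"
    define \<epsilon>1 where "\<epsilon>1 = min \<epsilon> (c/2)"
    have e1: "\<epsilon>1 > 0" using ep cpos by (simp add: \<epsilon>1_def)
    obtain \<delta> where dp: "\<delta> > 0" and sh: "\<And>xs. pseudo_orbit X f \<delta> xs \<Longrightarrow> \<exists>z\<in>X. eps_shadows X f \<epsilon>1 z xs"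
      using assms(4) e1 unfolding shadowing_property_def by blast
    show "\<exists>\<delta>>0. \<forall>xs. pseudo_orbit X f \<delta> xs \<and> two_sided_limit_pseudo_orbit X f xs \<longrightarrow>
          (\<exists>z\<in>X. eps_shadows X f \<epsilon> z xs \<and> limit_shadows X f z xs)"
    proof (intro exI[of _ \<delta>] conjI allI impI dp)
      fix xs assume H: "pseudo_orbit X f \<delta> xs \<and> two_sided_limit_pseudo_orbit X f xs"
      then obtain z where zX: "z \<in> X" and zs: "\<And>k. dist (zitr X f k z) (xs k) < \<epsilon>1"
        using sh unfolding eps_shadows_def by blast
      have xsX: "\<And>k. xs k \<in> X" using H unfolding pseudo_orbit_def by blast
      have zs2: "\<And>k. dist (zitr X f k z) (xs k) < c/2" using zs \<epsilon>1_def by fastforce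
      have zse: "\<And>k. dist (zitr X f k z) (xs k) < \<epsilon>" using zs \<epsilon>1_def by fastforce
      have "limit_shadows X f z xs" unfolding limit_shadows_def
        using fwd[OF hom UE assms(4) xsX _ zX zs2] bwd[OF hom UE assms(4) xsX _ zX zs2] H
        unfolding two_sided_limit_pseudo_orbit_def by blast
      then show "\<exists>z\<in>X. eps_shadows X f \<epsilon> z xs \<and> limit_shadows X f z xs"
        using zX zse unfolding eps_shadows_def by blast
    qed
  qed
qed

end
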